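(* For every sufficiently large prime $N$ and every $\mu$ with $N^{-1/2}\log^2N\le\mu<1$, there is a set $T$ of residues modulo $N$ such that $|f_T|\le\mu$ and $$|T|=O\left(\frac{L_1^2}{\mu^2}\cdot\frac{1+\log(1/\mu)}{L_2+\log(1/\mu)}\right),$$ with an absolute implied constant.
   Context: $L_1=\log N$, $L_2=\log\log N$. For a set $T$ of residues modulo $N$, $f_T(k)=\sum_{t\in T}e^{2\pi ikt/N}$ and $|f_T|=\frac1{|T|}\max_{1\le k\le N-1}|f_T(k)|$. *)

theory Defs
  imports "HOL-Analysis.Analysis"
begin

definition expsum :: "nat \<Rightarrow> nat set \<Rightarrow> nat \<Rightarrow> complex" where
  "expsum N T k = (\<Sum>t\<in>T. cis (2 * pi * real k * real t / real N))"

definition coh :: "nat \<Rightarrow> nat set \<Rightarrow> real" where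
  "coh N T = (1 / real (card T)) * Max ((\<lambda>k. cmod (expsum N T k)) ` {1..N-1})"

end

theory Submission
  imports Defs
begin

lemma cis_sum_zero:
  assumes "0 < k" "k < N"
  shows "(\<Sum>t<N. cis (2 * pi * real k * real t / real N)) = 0"
proof -
  define \<omega> where "\<omega> = cis (2 * pi * real k / real N)"
  have ne: "\<omega> \<noteq> 1"
  proof
    assume "\<omega> = 1"
    then obtain m :: int where m: "2 * pi * real k / real N = of_int m * 2 * pi"
      by (auto simp: \<omega>_def complex_eq_iff cos_one_2pi_int)
    with assms have "real k = real N * of_int m" by (simp add: field_simps)
    hence "int k = int N * m" by (metis of_int_eq_iff of_int_mult of_int_of_nat_eq)
    with assms show False
    proof (cases "m \<le> 0")
      case True
      hence "int N * m \<le> 0" by (simp add: mult_nonneg_nonpos)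
      with \<open>int k = int N * m\<close> assms show False by linarith
    next
      case False
      hence "int N * m \<ge> int N * 1" by (intro mult_left_mono) auto
      with \<open>int k = int N * m\<close> assms show False by linarith
    qed
  qed
  have "(\<Sum>t<N. cis (2 * pi * real k * real t / real N)) = (\<Sum>t<N. \<omega> ^ t)"
    unfolding \<omega>_def Complex.DeMoivre by (intro sum.cong refl arg_cong[where f=cis]) (simp add: field_simps)
  also have "\<dots> = (\<omega> ^ N - 1) / (\<omega> - 1)" using ne by (subst geometric_sum) auto
  also have "\<omega> ^ N = cis (2 * pi * real k)" using assms by (auto simp: \<omega>_def Complex.DeMoivre)
  also have "\<dots> = 1" by (simp add: complex_eq_iff)
  finally show ?thesis by simp
qed

lemma cos_sum_zero: "0 < k \<Longrightarrow> k < N \<Longrightarrow> (\<Sum>t<N. cos (2 * pi * real k * real t / real N)) = 0"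
  using arg_cong[OF cis_sum_zero, of k N Re] by (simp add: Re_sum)
lemma sin_sum_zero: "0 < k \<Longrightarrow> k < N \<Longrightarrow> (\<Sum>t<N. sin (2 * pi * real k * real t / real N)) = 0"
  using arg_cong[OF cis_sum_zero, of k N Im] by (simp add: Im_sum)

lemma exp_quad: fixes u :: real assumes "\<bar>u\<bar> \<le> 1" shows "exp u \<le> 1 + u + u^2"
proof (cases "u \<ge> 0")
  case True thus ?thesis using assms exp_bound by auto
next
  case False
  define v where "v = - u"
  have v: "0 < v" "v \<le> 1" using False assms by (auto simp: v_def)
  have "exp u = 1 / exp v" by (simp add: v_def exp_minus field_simps)
  also have "\<dots> \<le> 1 / (1 + v)"
    using v by (intro divide_left_mono) (auto simp: add_pos_pos)
  also have "\<dots> \<le> 1 - v + v^2"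
  proof -
    have "1 \<le> (1 + v) * (1 - v + v^2)" using v by (simp add: algebra_simps power2_eq_square power3_eq_cube)
    thus ?thesis using v by (simp add: field_simps)
  qed
  finally show ?thesis by (simp add: v_def)
qed

definition wt :: "real \<Rightarrow> nat set \<Rightarrow> nat set \<Rightarrow> real" where
  "wt p A T = (\<Prod>t\<in>T. p) * (\<Prod>t\<in>A-T. 1 - p)"

lemma wt_nonneg: "0 \<le> p \<Longrightarrow> p \<le> 1 \<Longrightarrow> 0 \<le> wt p A T"
  unfolding wt_def by (intro mult_nonneg_nonneg prod_nonneg) auto

lemma wt_total: "finite A \<Longrightarrow> (\<Sum>T\<in>Pow A. wt p A T) = 1"
  using prod_add[of A "\<lambda>_. p" "\<lambda>_. 1 - p"] by (simp add: wt_def)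

lemma mgf:
  assumes A: "finite A" and p: "0 \<le> p" "p \<le> 1" and c: "\<And>t. t \<in> A \<Longrightarrow> \<bar>c t\<bar> \<le> 1"
    and l: "\<bar>l\<bar> \<le> 1"
  shows "(\<Sum>T\<in>Pow A. wt p A T * exp (l * (\<Sum>t\<in>T. c t)))
     \<le> exp (l * p * (\<Sum>t\<in>A. c t) + p * l^2 * real (card A))"
proof -
  have "(\<Sum>T\<in>Pow A. wt p A T * exp (l * (\<Sum>t\<in>T. c t)))
     = (\<Sum>T\<in>Pow A. (\<Prod>t\<in>T. p * exp (l * c t)) * (\<Prod>t\<in>A-T. 1 - p))"
  proof (intro sum.cong refl)
    fix T assume "T \<in> Pow A"
    hence "finite T" using A finite_subset by auto
    thus "wt p A T * exp (l * (\<Sum>t\<in>T. c t)) = (\<Prod>t\<in>T. p * exp (l * c t)) * (\<Prod>t\<in>A-T. 1 - p)"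
      by (simp add: wt_def prod.distrib sum_distrib_left exp_sum)
  qed
  also have "\<dots> = (\<Prod>t\<in>A. p * exp (l * c t) + (1 - p))"
    using prod_add[OF A, of "\<lambda>t. p * exp (l * c t)" "\<lambda>_. 1 - p"] by simp
  also have "\<dots> \<le> (\<Prod>t\<in>A. exp (l * p * c t + p * l^2))"
  proof (intro prod_mono conjI)
    fix t assume t: "t \<in> A"
    show "0 \<le> p * exp (l * c t) + (1 - p)" using p by auto
    have u: "\<bar>l * c t\<bar> \<le> 1" using c[OF t] l by (simp add: abs_mult mult_le_one)
    have "(l * c t)^2 \<le> l^2"
    proof -
      have "(l * c t)^2 = l^2 * (c t)^2" by (simp add: power_mult_distrib)
      also have "\<dots> \<le> l^2 * 1" using c[OF t] by (intro mult_left_mono) (auto simp: abs_square_le_1)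
      finally show ?thesis by simp
    qed
    hence "exp (l * c t) \<le> 1 + l * c t + l^2" using exp_quad[OF u] by linarith
    hence "p * exp (l * c t) + (1 - p) \<le> 1 + (l * p * c t + p * l^2)"
      using p mult_left_mono[of "exp (l * c t)" "1 + l * c t + l^2" p] by (simp add: algebra_simps)
    also have "\<dots> \<le> exp (l * p * c t + p * l^2)" by (rule exp_ge_add_one_self)
    finally show "p * exp (l * c t) + (1 - p) \<le> exp (l * p * c t + p * l^2)" .
  qed
  also have "\<dots> = exp (l * p * (\<Sum>t\<in>A. c t) + p * l^2 * real (card A))"
    using A by (simp add: exp_sum[symmetric] sum.distrib sum_distrib_left)
  finally show ?thesis .
qed

lemma tail:
  assumes A: "finite A" and p: "0 \<le> p" "p \<le> 1" and c: "\<And>t. t \<in> A \<Longrightarrow> \<bar>c t\<bar> \<le> 1"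
    and l: "0 \<le> l" "l \<le> 1"
  shows "(\<Sum>T\<in>Pow A. if (\<Sum>t\<in>T. c t) \<ge> p * (\<Sum>t\<in>A. c t) + s then wt p A T else 0)
     \<le> exp (p * l^2 * real (card A) - l * s)"
proof -
  have "(\<Sum>T\<in>Pow A. if (\<Sum>t\<in>T. c t) \<ge> p * (\<Sum>t\<in>A. c t) + s then wt p A T else 0)
     \<le> (\<Sum>T\<in>Pow A. wt p A T * exp (l * (\<Sum>t\<in>T. c t)) * exp (- l * p * (\<Sum>t\<in>A. c t) - l * s))"
  proof (intro sum_mono)
    fix T assume "T \<in> Pow A"
    have w: "0 \<le> wt p A T" using wt_nonneg p by auto
    show "(if (\<Sum>t\<in>T. c t) \<ge> p * (\<Sum>t\<in>A. c t) + s then wt p A T else 0)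
       \<le> wt p A T * exp (l * (\<Sum>t\<in>T. c t)) * exp (- l * p * (\<Sum>t\<in>A. c t) - l * s)"
    proof (cases "(\<Sum>t\<in>T. c t) \<ge> p * (\<Sum>t\<in>A. c t) + s")
      case True
      have "l * (p * (\<Sum>t\<in>A. c t) + s) \<le> l * (\<Sum>t\<in>T. c t)" using True l by (intro mult_left_mono) auto
      hence "1 \<le> exp (l * (\<Sum>t\<in>T. c t)) * exp (- l * p * (\<Sum>t\<in>A. c t) - l * s)"
        by (simp add: exp_add[symmetric] algebra_simps)
      hence "wt p A T * 1 \<le> wt p A T * (exp (l * (\<Sum>t\<in>T. c t)) * exp (- l * p * (\<Sum>t\<in>A. c t) - l * s))"
        using w by (intro mult_left_mono) auto
      thus ?thesis using True by (simp add: mult.assoc)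
    next
      case False thus ?thesis using w by simp
    qed
  qed
  also have "\<dots> = (\<Sum>T\<in>Pow A. wt p A T * exp (l * (\<Sum>t\<in>T. c t))) * exp (- l * p * (\<Sum>t\<in>A. c t) - l * s)"
    by (simp add: sum_distrib_right)
  also have "\<dots> \<le> exp (l * p * (\<Sum>t\<in>A. c t) + p * l^2 * real (card A)) * exp (- l * p * (\<Sum>t\<in>A. c t) - l * s)"
    using mgf[OF A p c] l by (intro mult_right_mono) auto
  also have "\<dots> = exp (p * l^2 * real (card A) - l * s)" by (simp add: exp_add[symmetric])
  finally show ?thesis .
qed

definition cc :: "nat \<Rightarrow> nat \<Rightarrow> nat \<Rightarrow> nat \<Rightarrow> real" where
  "cc N k j t = (if j = 0 then cos (2 * pi * real k * real t / real N)
     else if j = 1 then - cos (2 * pi * real k * real t / real N)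
     else if j = 2 then sin (2 * pi * real k * real t / real N)
     else - sin (2 * pi * real k * real t / real N))"

lemma cc_bound: "\<bar>cc N k j t\<bar> \<le> 1" by (simp add: cc_def)

lemma cc_sum: "0 < k \<Longrightarrow> k < N \<Longrightarrow> (\<Sum>t<N. cc N k j t) = 0"
  using cos_sum_zero[of k N] sin_sum_zero[of k N]
  by (cases "j=0"; cases "j=1"; cases "j=2") (simp_all add: cc_def sum_negf)

lemma exists_good:
  fixes N :: nat and \<mu> M :: real
  assumes N: "N \<ge> 2" and mu: "0 < \<mu>" "\<mu> \<le> 1" and M: "0 < M" "M \<le> real N"
    and small: "4 * real N * exp (- (\<mu>^2 * M / 64)) < 1"
  shows "\<exists>T. T \<subseteq> {0..<N} \<and> T \<noteq> {} \<and> coh N T \<le> \<mu> \<and> real (card T) \<le> 3 * M / 2"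
proof -
  define A where "A = {..<N}"
  define p where "p = M / real N"
  have A: "finite A" by (simp add: A_def)
  have cardA: "real (card A) = real N" by (simp add: A_def)
  have p: "0 \<le> p" "p \<le> 1" using M N by (auto simp: p_def field_simps)
  have pN: "p * real N = M" using N by (simp add: p_def)
  define K where "K = {1..N-1}"
  define s where "s = \<mu> * M / 4"
  define ind where "ind c r T = (if (\<Sum>t\<in>T. c t) \<ge> p * (\<Sum>t\<in>A. c t) + r then wt p A T else 0)"
    for c :: "nat \<Rightarrow> real" and r T
  define E where "E = exp (- (\<mu>^2 * M / 64))"
  have ind_nonneg: "0 \<le> ind c r T" for c r T using wt_nonneg[OF p] by (simp add: ind_def)
  have tail_cc: "(\<Sum>T\<in>Pow A. ind (cc N k j) s T) \<le> E" if "k \<in> K" for k j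
  proof -
    have "(\<Sum>T\<in>Pow A. ind (cc N k j) s T) \<le> exp (p * (\<mu>/8)^2 * real (card A) - (\<mu>/8) * s)"
      unfolding ind_def using mu by (intro tail[OF A p]) (auto simp: cc_bound)
    also have "p * (\<mu>/8)^2 * real (card A) - (\<mu>/8) * s = - (\<mu>^2 * M / 64)"
      using pN cardA by (simp add: s_def power2_eq_square field_simps)
    finally show ?thesis by (simp add: E_def)
  qed
  have cardev: "(\<Sum>T\<in>Pow A. ind c (M/2) T) \<le> E" if "\<And>t. \<bar>c t\<bar> \<le> 1" for c
  proof -
    have "(\<Sum>T\<in>Pow A. ind c (M/2) T) \<le> exp (p * (1/4)^2 * real (card A) - (1/4) * (M/2))"
      unfolding ind_def using that by (intro tail[OF A p]) auto
    also have "p * (1/4)^2 * real (card A) - (1/4) * (M/2) = - (M / 16)"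
      using pN cardA by (simp add: power2_eq_square field_simps)
    also have "exp (- (M/16)) \<le> E"
    proof -
      have "\<mu>^2 \<le> 1" using mu by (simp add: power_le_one)
      hence "\<mu>^2 * M \<le> 1 * M" using M by (intro mult_right_mono) auto
      hence "\<mu>^2 * M / 64 \<le> M / 16" using M by linarith
      thus ?thesis by (simp add: E_def)
    qed
    finally show ?thesis .
  qed
  define bad where "bad T \<longleftrightarrow> real (card T) \<ge> 3 * M / 2 \<or> real (card T) \<le> M / 2 \<or>
      (\<exists>k\<in>K. \<exists>j<4. (\<Sum>t\<in>T. cc N k j t) \<ge> s)" for T
  have "\<exists>T\<in>Pow A. \<not> bad T"
  proof (rule ccontr)
    assume "\<not> ?thesis"
    hence allbad: "bad T" if "T \<in> Pow A" for T using that by auto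
    have sum1: "(\<Sum>t\<in>A. (1::real)) = real N" by (simp add: A_def)
    have sumcc: "(\<Sum>t\<in>A. cc N k j t) = 0" if "k \<in> K" for k j
      using that cc_sum[of k N j] N by (auto simp: A_def K_def)
    have pt: "wt p A T \<le> ind (\<lambda>_. 1) (M/2) T + ind (\<lambda>_. -1) (M/2) T
        + (\<Sum>k\<in>K. \<Sum>j<4. ind (cc N k j) s T)" if T: "T \<in> Pow A" for T
    proof -
      have nn: "0 \<le> (\<Sum>k\<in>K. \<Sum>j<4. ind (cc N k j) s T)" by (intro sum_nonneg ind_nonneg)
      from allbad[OF T] consider "real (card T) \<ge> 3 * M / 2" | "real (card T) \<le> M / 2"
        | "\<exists>k\<in>K. \<exists>j<4. (\<Sum>t\<in>T. cc N k j t) \<ge> s" unfolding bad_def by blast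
      thus ?thesis
      proof cases
        case 1
        hence "ind (\<lambda>_. 1) (M/2) T = wt p A T" using pN cardA by (simp add: ind_def)
        thus ?thesis using nn ind_nonneg[of "\<lambda>_. -1" "M/2" T] by linarith
      next
        case 2
        hence "ind (\<lambda>_. -1) (M/2) T = wt p A T" using pN cardA
          by (simp add: ind_def sum_negf cardA)
        thus ?thesis using nn ind_nonneg[of "\<lambda>_. 1" "M/2" T] by linarith
      next
        case 3
        then obtain k j where kj: "k \<in> K" "j < 4" "(\<Sum>t\<in>T. cc N k j t) \<ge> s" by blast
        hence eq: "ind (cc N k j) s T = wt p A T" using sumcc[OF kj(1)] by (simp add: ind_def)
        have "ind (cc N k j) s T \<le> (\<Sum>j<4. ind (cc N k j) s T)"
          using kj(2) by (intro member_le_sum ind_nonneg) auto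
        also have "\<dots> \<le> (\<Sum>k\<in>K. \<Sum>j<4. ind (cc N k j) s T)"
          using kj(1) by (intro member_le_sum sum_nonneg ind_nonneg) (auto simp: K_def)
        finally show ?thesis using eq ind_nonneg[of "\<lambda>_. 1" "M/2" T] ind_nonneg[of "\<lambda>_. -1" "M/2" T]
          by linarith
      qed
    qed
    have "1 = (\<Sum>T\<in>Pow A. wt p A T)" using wt_total[OF A] by simp
    also have "\<dots> \<le> (\<Sum>T\<in>Pow A. ind (\<lambda>_. 1) (M/2) T + ind (\<lambda>_. -1) (M/2) T
        + (\<Sum>k\<in>K. \<Sum>j<4. ind (cc N k j) s T))" by (intro sum_mono pt)
    also have "\<dots> = (\<Sum>T\<in>Pow A. ind (\<lambda>_. 1) (M/2) T) + (\<Sum>T\<in>Pow A. ind (\<lambda>_. -1) (M/2) T)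
        + (\<Sum>k\<in>K. \<Sum>j<4. \<Sum>T\<in>Pow A. ind (cc N k j) s T)"
      by (simp add: sum.distrib sum.swap[of _ "Pow A"] sum.swap[of _ _ "{..<4::nat}"])
    also have "\<dots> \<le> E + E + (\<Sum>k\<in>K. \<Sum>j<(4::nat). E)"
      by (intro add_mono cardev sum_mono tail_cc) auto
    also have "\<dots> = (2 + 4 * real (N - 1)) * E" by (simp add: K_def algebra_simps)
    also have "\<dots> \<le> 4 * real N * E"
      using N by (intro mult_right_mono) (auto simp: E_def of_nat_diff)
    also have "\<dots> < 1" using small by (simp add: E_def)
    finally show False by simp
  qed
  then obtain T where T: "T \<in> Pow A" "\<not> bad T" by blast
  have Tfin: "finite T" using T A finite_subset by auto
  have cT: "M / 2 < real (card T)" "real (card T) < 3 * M / 2" using T(2) by (auto simp: bad_def)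
  have Tne: "T \<noteq> {}" using cT M by auto
  have ccb: "(\<Sum>t\<in>T. cc N k j t) < s" if "k \<in> K" "j < 4" for k j
    using T(2) that unfolding bad_def by (meson not_le)
  have fk: "cmod (expsum N T k) \<le> \<mu> * real (card T)" if k: "k \<in> {1..N-1}" for k
  proof -
    have re: "Re (expsum N T k) = (\<Sum>t\<in>T. cc N k 0 t)" by (simp add: expsum_def Re_sum cc_def)
    have im: "Im (expsum N T k) = (\<Sum>t\<in>T. cc N k 2 t)" by (simp add: expsum_def Im_sum cc_def)
    have re': "- Re (expsum N T k) = (\<Sum>t\<in>T. cc N k 1 t)" by (simp add: expsum_def Re_sum cc_def sum_negf)
    have im': "- Im (expsum N T k) = (\<Sum>t\<in>T. cc N k 3 t)" by (simp add: expsum_def Im_sum cc_def sum_negf)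
    have kK: "k \<in> K" using k by (simp add: K_def)
    have "\<bar>Re (expsum N T k)\<bar> < s" using ccb[OF kK, of 0] ccb[OF kK, of 1] re re' by linarith
    moreover have "\<bar>Im (expsum N T k)\<bar> < s" using ccb[OF kK, of 2] ccb[OF kK, of 3] im im' by linarith
    ultimately have "cmod (expsum N T k) \<le> 2 * s" using cmod_le[of "expsum N T k"] by linarith
    also have "2 * s = \<mu> * (M / 2)" by (simp add: s_def)
    also have "\<dots> \<le> \<mu> * real (card T)" using cT mu by (intro mult_left_mono) auto
    finally show ?thesis .
  qed
  have "Max ((\<lambda>k. cmod (expsum N T k)) ` {1..N-1}) \<le> \<mu> * real (card T)"
    using N fk by (subst Max_le_iff) auto
  hence "coh N T \<le> \<mu>" using cT M by (simp add: coh_def field_simps)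
  moreover have "T \<subseteq> {0..<N}" using T(1) by (auto simp: A_def)
  ultimately show ?thesis using Tne cT by auto
qed

theorem corollary5:
  shows "\<exists>C>0. \<exists>N0::nat. \<forall>N::nat. \<forall>\<mu>::real.
    prime N \<and> N \<ge> N0 \<and> real N powr (-1/2) * (ln (real N))^2 \<le> \<mu> \<and> \<mu> < 1 \<longrightarrow>
    (\<exists>T. T \<subseteq> {0..<N} \<and> T \<noteq> {} \<and> coh N T \<le> \<mu> \<and>
       real (card T) \<le> C * ((ln (real N))^2 / \<mu>^2) *
         ((1 + ln (1/\<mu>)) / (ln (ln (real N)) + ln (1/\<mu>))))"
proof (rule exI[where x="288::real"], intro conjI exI[where x="729::nat"] allI impI)
  fix N :: nat and \<mu> :: real
  assume H: "prime N \<and> N \<ge> 729 \<and> real N powr (-1/2) * (ln (real N))^2 \<le> \<mu> \<and> \<mu> < 1"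
  hence N: "N \<ge> 729" and mulo: "real N powr (-1/2) * (ln (real N))^2 \<le> \<mu>" and mu1: "\<mu> < 1" by auto
  define L where "L = ln (real N)"
  have ln3: "1 \<le> ln (3::real)"
  proof -
    have "exp 1 \<le> (3::real)" using exp_bound[of 1] by simp
    thus ?thesis by (subst ln_ge_iff) auto
  qed
  have "ln (729::real) = 6 * ln 3"
    using ln_realpow[of 3 6] by simp
  moreover have "ln (729::real) \<le> L" unfolding L_def using N by (subst ln_le_cancel_iff) auto
  ultimately have L6: "6 \<le> L" using ln3 by linarith
  have Npos: "real N > 0" using N by simp
  have pw: "(real N powr (-1/2))^2 = 1 / real N"
  proof -
    have "(real N powr (-1/2))^2 = real N powr (-1/2) * real N powr (-1/2)" by (simp add: power2_eq_square)
    also have "\<dots> = real N powr (-1)" by (simp add: powr_add[symmetric])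
    also have "\<dots> = 1 / real N" using Npos by (simp add: powr_minus_divide)
    finally show ?thesis .
  qed
  have mpos: "0 < real N powr (-1/2) * L^2" using Npos L6 by simp
  hence mu0: "0 < \<mu>" using mulo by (simp add: L_def)
  have "(real N powr (-1/2) * L^2)^2 \<le> \<mu>^2"
    using mulo mpos by (intro power_mono) (auto simp: L_def)
  hence musq: "L^4 / real N \<le> \<mu>^2" using pw by (simp add: power_mult_distrib)
  hence NL4: "L^4 \<le> real N * \<mu>^2" using Npos by (simp add: field_simps)
  define M where "M = 64 * (ln (4 * real N) + 1) / \<mu>^2"
  have ln4N: "ln (4 * real N) = ln 4 + L" using Npos by (simp add: L_def ln_mult)
  have ln4: "ln (4::real) \<le> 3" using ln_le_minus_one[of 4] by simp
  have ln4p: "0 \<le> ln (4::real)" by simp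
  have "0 < 64 * (ln (4 * real N) + 1)" unfolding ln4N using L6 ln4p by (smt (verit))
  hence Mpos: "0 < M" unfolding M_def using mu0 by (intro divide_pos_pos) auto
  have "L^4 \<ge> 216 * L"
  proof -
    have "L^3 \<ge> 6^3" using L6 by (intro power_mono) auto
    hence "L * L^3 \<ge> L * 216" using L6 by (intro mult_left_mono) auto
    thus ?thesis by (simp add: power_numeral_reduce mult.commute)
  qed
  hence "64 * (ln (4 * real N) + 1) \<le> real N * \<mu>^2" using NL4 ln4N ln4 L6 by (smt (verit))
  hence MN: "M \<le> real N" unfolding M_def using mu0 by (simp add: field_simps)
  have small: "4 * real N * exp (- (\<mu>^2 * M / 64)) < 1"
  proof -
    have "\<mu>^2 * M / 64 = ln (4 * real N) + 1" using mu0 by (simp add: M_def)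
    hence "- (\<mu>^2 * M / 64) = - ln (4 * real N) + (-1)" by (smt (verit))
    hence "exp (- (\<mu>^2 * M / 64)) = exp (- ln (4 * real N)) * exp (-1)" by (simp only: exp_add)
    also have "exp (- ln (4 * real N)) = 1 / (4 * real N)" using Npos by (simp add: exp_minus inverse_eq_divide)
    finally have "4 * real N * exp (- (\<mu>^2 * M / 64)) = exp (-1)" using Npos by simp
    also have "\<dots> < 1" by simp
    finally show ?thesis .
  qed
  obtain T where T: "T \<subseteq> {0..<N}" "T \<noteq> {}" "coh N T \<le> \<mu>" "real (card T) \<le> 3 * M / 2"
  proof -
    have "N \<ge> 2" using N by simp
    moreover have "\<mu> \<le> 1" using mu1 by simp
    ultimately show ?thesis using exists_good[OF _ mu0 _ Mpos MN small] that by blast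
  qed
  define x where "x = ln (1/\<mu>)"
  have x0: "0 \<le> x" using mu0 mu1 by (simp add: x_def)
  have L2: "ln L \<le> L" using L6 ln_le_minus_one[of L] by linarith
  have L2p: "0 < ln L" using L6 by simp
  have "real (card T) \<le> 3 * M / 2" by fact
  also have "\<dots> = 96 * (ln (4 * real N) + 1) / \<mu>^2" using mu0 unfolding M_def by (simp add: field_simps)
  also have "\<dots> = 96 * (ln 4 + L + 1) / \<mu>^2" by (simp only: ln4N)
  also have "\<dots> \<le> 288 * L / \<mu>^2" using ln4 L6 mu0 by (intro divide_right_mono) auto
  also have "\<dots> \<le> 288 * (L^2 / \<mu>^2) * ((1 + x) / (ln L + x))"
  proof -
    have "ln L + x \<le> L * (1 + x)" using L2 x0 L6 mult_left_mono[of 1 L x] by (simp add: algebra_simps)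
    hence "L * (ln L + x) \<le> L^2 * (1 + x)" using L6
      using mult_left_mono[of "ln L + x" "L * (1 + x)" L] by (simp add: power2_eq_square mult.assoc)
    hence "L \<le> L^2 * ((1 + x) / (ln L + x))" using L2p x0 by (simp add: field_simps)
    hence "288 * L / \<mu>^2 \<le> 288 * (L^2 * ((1 + x) / (ln L + x))) / \<mu>^2"
      using mu0 by (intro divide_right_mono) auto
    thus ?thesis by (simp add: divide_inverse mult_ac)
  qed
  finally have "real (card T) \<le> 288 * ((ln (real N))^2 / \<mu>^2) *
         ((1 + ln (1/\<mu>)) / (ln (ln (real N)) + ln (1/\<mu>)))" by (simp add: L_def x_def)
  thus "\<exists>T. T \<subseteq> {0..<N} \<and> T \<noteq> {} \<and> coh N T \<le> \<mu> \<and>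
       real (card T) \<le> 288 * ((ln (real N))^2 / \<mu>^2) *
         ((1 + ln (1/\<mu>)) / (ln (ln (real N)) + ln (1/\<mu>)))" using T by blast
qed simp

end
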